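(* Let $\mathcal J\subseteq\mathbb R$ be an open interval, $\phi:\mathcal J\to\mathbb R$ three times continuously differentiable with $\phi''>0$, $K\ge1$, $\mathcal M=\mathcal J^K$, $h$ a primitive of $\sqrt{\phi''}$ with inverse $H=h^{-1}$ on $h(\mathcal J)$ (both applied componentwise to vectors), and $d_\phi(\boldsymbol x,\boldsymbol y)^2=\sum_{j=1}^K(h(x_j)-h(y_j))^2$. Let $P$ be a Borel probability measure on $\mathcal M$, $\boldsymbol X$ the identity map on $\mathcal M$, and assume $E[\|h(\boldsymbol X)\|^2]<\infty$. Let $\mathcal C=\{\boldsymbol y_1,\dots,\boldsymbol y_N\}\subset\mathcal M$ be a codebook of distinct points, let $S_i=\{\boldsymbol x\in\mathcal M: d_\phi(\boldsymbol x,\boldsymbol y_i)\le d_\phi(\boldsymbol x,\boldsymbol y_j)\ \forall j\}$ be the $d_\phi$-Voronoi cells, $B_i=\mathrm{int}(S_i)$, and assume $P(S_i\cap S_j)=0$ for $i\neq j$ and $P(S_i)>0$ for all $i$. Define $$\boldsymbol y_i^*=\frac{1}{P(S_i)}E_\phi[\boldsymbol X;S_i]:=H\Big(\frac{1}{P(S_i)}E[h(\boldsymbol X)\mathbf 1_{S_i}(\boldsymbol X)]\Big).$$ Then for all $i=1,\dots,N$, $$\boldsymbol y_i^*=\frac{1}{P(B_i)}E_\phi[\boldsymbol X;B_i]\in B_i\subset S_i,$$ where analogously $\frac{1}{P(B_i)}E_\phi[\boldsymbol X;B_i]=H\big(\frac{1}{P(B_i)}E[h(\boldsymbol X)\mathbf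 1_{B_i}(\boldsymbol X)]\big)$.
   Context: $\boldsymbol y_i^*$ is the $d_\phi$-centroid (the minimizer of $E[d_\phi(\boldsymbol X,\boldsymbol\xi)^2\mid \boldsymbol X\in S_i]$) of the cell $S_i$; the quantizer $q^*(\boldsymbol X)=\sum_i \boldsymbol y_i^*\mathbf 1_{S_i}(\boldsymbol X)$ minimizes the distortion $E[d_\phi(\boldsymbol X,q(\boldsymbol X))^2]$ among quantizers with the partition $\{S_i\}$. *)

theory Defs
  imports "HOL-Probability.Probability"
begin

definition vmap :: "(real \<Rightarrow> real) \<Rightarrow> real^'k \<Rightarrow> real^'k" where
  "vmap f x = (\<chi> j. f (x $ j))"

definition cube :: "real set \<Rightarrow> (real^'k) set" where
  "cube J = {x. \<forall>j. x $ j \<in> J}"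

definition dphi :: "(real \<Rightarrow> real) \<Rightarrow> real^'k \<Rightarrow> real^'k \<Rightarrow> real" where
  "dphi h x y = sqrt (\<Sum>j\<in>UNIV. (h (x $ j) - h (y $ j))^2)"

definition voronoi_cell ::
  "(real \<Rightarrow> real) \<Rightarrow> real set \<Rightarrow> (nat \<Rightarrow> real^'k) \<Rightarrow> nat \<Rightarrow> nat \<Rightarrow> (real^'k) set" where
  "voronoi_cell h J y N i = {x \<in> cube J. \<forall>j<N. dphi h x (y i) \<le> dphi h x (y j)}"

definition phi_centroid ::
  "(real^'k) measure \<Rightarrow> (real \<Rightarrow> real) \<Rightarrow> real set \<Rightarrow> (real^'k) set \<Rightarrow> real^'k" where
  "phi_centroid P h J A =
     vmap (the_inv_into J h) ((1 / measure P A) *\<^sub>R (LINT x:A|P. vmap h x))"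

end

theory Submission
  imports Defs
begin


lemma integral_pos_on:
  fixes g :: "'a \<Rightarrow> real"
  assumes T: "T \<in> sets M" and pos: "measure M T > 0"
    and int: "integrable M (\<lambda>x. indicator T x * g x)"
    and g: "\<And>x. x \<in> T \<Longrightarrow> g x > 0"
  shows "integral\<^sup>L M (\<lambda>x. indicator T x * g x) > 0"
proof -
  have nn0: "0 \<le> indicator T x * g x" for x
    using g[of x] by (cases "x \<in> T") auto
  have nn: "AE x in M. 0 \<le> indicator T x * g x"
    using nn0 by (intro AE_I2)
  have ge: "integral\<^sup>L M (\<lambda>x. indicator T x * g x) \<ge> 0"
    using nn by (rule integral_nonneg_AE)
  show ?thesis
  proof (rule ccontr)
    assume "\<not> ?thesis"
    with ge have "integral\<^sup>L M (\<lambda>x. indicator T x * g x) = 0" by linarith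
    with integral_nonneg_eq_0_iff_AE[OF int nn]
    have ae: "AE x in M. indicator T x * g x = 0" by blast
    have imp: "indicator T x * g x = 0 \<longrightarrow> x \<notin> T" for x
      using g[of x] by (cases "x \<in> T") auto
    have aeT: "AE x in M. x \<notin> T"
      using ae by (rule AE_mp) (rule AE_I2, rule imp)
    have st: "{x\<in>space M. \<not> x \<notin> T} = T" using sets.sets_into_space[OF T] by auto
    have "emeasure M T = 0" using AE_iff_measurable[OF T st] aeT by simp
    then have "measure M T = 0" unfolding measure_def by simp
    with pos show False by linarith
  qed
qed
lemma mean_affine:
  fixes u :: "'a \<Rightarrow> 'b::euclidean_space"
  assumes fin: "finite_measure M" and T: "T \<in> sets M" and pos: "measure M T > 0"
    and int: "integrable M u"
    and lt: "\<And>x. x \<in> T \<Longrightarrow> c \<bullet> u x + d < 0"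
  shows "c \<bullet> ((1 / measure M T) *\<^sub>R integral\<^sup>L M (\<lambda>x. indicator T x *\<^sub>R u x)) + d < 0"
proof -
  interpret finite_measure M by fact
  have intT: "integrable M (\<lambda>x. indicator T x *\<^sub>R u x)"
    using T int by (rule integrable_mult_indicator)
  have "integrable M (indicator T :: 'a \<Rightarrow> real)" using T by (intro integrable_real_indicator) (auto simp: less_top[symmetric])
  then have intc: "integrable M (\<lambda>x. indicator T x * d)"
    by (rule integrable_mult_left)
  have int1: "integrable M (\<lambda>x. c \<bullet> (indicator T x *\<^sub>R u x))"
    using intT by (rule integrable_inner_right)
  have eq: "(\<lambda>x. indicator T x * (- (c \<bullet> u x + d))) =
      (\<lambda>x. - (c \<bullet> (indicator T x *\<^sub>R u x) + indicator T x * d))"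
    by (auto simp: indicator_def fun_eq_iff)
  have "integral\<^sup>L M (\<lambda>x. indicator T x * (- (c \<bullet> u x + d))) > 0"
  proof (rule integral_pos_on[OF T pos])
    show "integrable M (\<lambda>x. indicator T x * (- (c \<bullet> u x + d)))"
      unfolding eq by (intro Bochner_Integration.integrable_minus Bochner_Integration.integrable_add int1 intc)
    fix x assume "x \<in> T" then show "0 < - (c \<bullet> u x + d)" using lt[of x] by linarith
  qed
  also have "integral\<^sup>L M (\<lambda>x. indicator T x * (- (c \<bullet> u x + d))) =
      - (c \<bullet> integral\<^sup>L M (\<lambda>x. indicator T x *\<^sub>R u x) + measure M T * d)"
  proof -
    have i1: "integral\<^sup>L M (\<lambda>x. c \<bullet> (indicator T x *\<^sub>R u x)) = c \<bullet> integral\<^sup>L M (\<lambda>x. indicator T x *\<^sub>R u x)"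
      by (rule integral_inner_right) (rule intT)
    have i2: "integral\<^sup>L M (\<lambda>x. indicator T x * d) = measure M T * d"
      using T by (simp add: Int_absorb2 sets.sets_into_space)
    show ?thesis unfolding eq
      by (simp only: Bochner_Integration.integral_minus Bochner_Integration.integral_add[OF int1 intc] i1 i2)
  qed
  finally have "c \<bullet> integral\<^sup>L M (\<lambda>x. indicator T x *\<^sub>R u x) + measure M T * d < 0" by simp
  then have "(1 / measure M T) * (c \<bullet> integral\<^sup>L M (\<lambda>x. indicator T x *\<^sub>R u x) + measure M T * d) < 0"
    using pos by (metis mult_pos_neg zero_less_divide_1_iff)
  moreover have "(1 / measure M T) * (c \<bullet> integral\<^sup>L M (\<lambda>x. indicator T x *\<^sub>R u x) + measure M T * d)
     = c \<bullet> ((1 / measure M T) *\<^sub>R integral\<^sup>L M (\<lambda>x. indicator T x *\<^sub>R u x)) + d"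
    using pos by (simp add: distrib_left)
  ultimately show ?thesis by simp
qed

lemma mean_interval:
  fixes u :: "'a \<Rightarrow> 'b::euclidean_space"
  assumes fin: "finite_measure M" and T: "T \<in> sets M" and pos: "measure M T > 0"
    and int: "integrable M u" and I: "is_interval (I::real set)"
    and inI: "\<And>x. x \<in> T \<Longrightarrow> b \<bullet> u x \<in> I"
  shows "b \<bullet> ((1 / measure M T) *\<^sub>R integral\<^sup>L M (\<lambda>x. indicator T x *\<^sub>R u x)) \<in> I"
    (is "?m \<in> I")
proof (rule ccontr)
  assume nI: "?m \<notin> I"
  have "(\<forall>v\<in>I. v > ?m) \<or> (\<forall>v\<in>I. v < ?m)"
  proof (rule ccontr)
    assume "\<not> ?thesis"
    then obtain v1 v2 where v: "v1 \<in> I" "v2 \<in> I" "v1 \<le> ?m" "v2 \<ge> ?m"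
      by (meson not_le)
    have "?m \<in> I" using I v unfolding is_interval_1 by (meson)
    with nI show False by simp
  qed
  then show False
  proof
    assume H: "\<forall>v\<in>I. v > ?m"
    have "(- b) \<bullet> ((1 / measure M T) *\<^sub>R integral\<^sup>L M (\<lambda>x. indicator T x *\<^sub>R u x)) + ?m < 0"
      proof (rule mean_affine[OF fin T pos int])
        fix x assume "x \<in> T"
        then have "b \<bullet> u x > ?m" using H inI by blast
        then show "(- b) \<bullet> u x + ?m < 0" by (simp add: inner_minus_left)
      qed
    then show False by simp
  next
    assume H: "\<forall>v\<in>I. v < ?m"
    have "b \<bullet> ((1 / measure M T) *\<^sub>R integral\<^sup>L M (\<lambda>x. indicator T x *\<^sub>R u x)) + (- ?m) < 0"
      proof (rule mean_affine[OF fin T pos int])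
        fix x assume "x \<in> T"
        then have "b \<bullet> u x < ?m" using H inI by blast
        then show "b \<bullet> u x + (- ?m) < 0" by simp
      qed
    then show False by simp
  qed
qed


lemma sets_P_sub:
  assumes "sets P = sets (restrict_space borel \<Omega>)" "B \<in> sets borel" "B \<subseteq> \<Omega>"
  shows "B \<in> sets P"
proof -
  have "B = \<Omega> \<inter> B" using assms(3) by blast
  then show ?thesis unfolding assms(1) sets_restrict_space using assms(2) by blast
qed

lemma cube_open: "open J \<Longrightarrow> open (cube J :: (real^'k) set)"
proof -
  assume J: "open J"
  have "cube J = (\<Inter>k\<in>UNIV. (\<lambda>x::real^'k. x $ k) -` J)" unfolding cube_def by auto
  then show ?thesis using J by (simp add: open_INT open_vimage_vec_nth)
qed

lemma dphi_cont:
  assumes h: "continuous_on J h"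
  shows "continuous_on (cube J :: (real^'k) set) (\<lambda>x. dphi h x c)"
proof -
  have "continuous_on (cube J :: (real^'k) set) (\<lambda>x. h (x $ k))" for k
    by (rule continuous_on_compose2[OF h]) (auto simp: cube_def intro!: continuous_intros)
  then show ?thesis unfolding dphi_def by (intro continuous_intros) auto
qed

lemma vmap_cont:
  assumes h: "continuous_on J h"
  shows "continuous_on (cube J :: (real^'k) set) (vmap h)"
proof -
  have "continuous_on (cube J :: (real^'k) set) (\<lambda>x. h (x $ k))" for k
    by (rule continuous_on_compose2[OF h]) (auto simp: cube_def intro!: continuous_intros)
  then show ?thesis unfolding vmap_def by (intro continuous_on_vec_lambda) auto
qed

definition sqd :: "real^'k \<Rightarrow> real^'k \<Rightarrow> real" where
  "sqd v a = (\<Sum>k\<in>UNIV. (v $ k - a $ k)^2)"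

lemma dphi_sqd: "dphi h x c = sqrt (sqd (vmap h x) (vmap h c))"
  unfolding dphi_def sqd_def vmap_def by simp

lemma sqd_affine:
  "sqd v a - sqd v b = (\<chi> k. 2 * (b $ k - a $ k)) \<bullet> v + (\<Sum>k\<in>UNIV. (a $ k)^2 - (b $ k)^2)"
proof -
  have "sqd v a - sqd v b = (\<Sum>k\<in>UNIV. (v $ k - a $ k)^2 - (v $ k - b $ k)^2)"
    unfolding sqd_def by (simp add: sum_subtractf)
  also have "\<dots> = (\<Sum>k\<in>UNIV. 2 * (b $ k - a $ k) * v $ k + ((a $ k)^2 - (b $ k)^2))"
    by (rule sum.cong) (auto simp: power2_eq_square algebra_simps)
  also have "\<dots> = (\<Sum>k\<in>UNIV. 2 * (b $ k - a $ k) * v $ k) + (\<Sum>k\<in>UNIV. (a $ k)^2 - (b $ k)^2)"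
    by (simp add: sum.distrib)
  finally show ?thesis by (simp add: inner_vec_def)
qed

theorem corollary1:
  fixes J :: "real set"
    and phi phi1 phi2 phi3 h :: "real \<Rightarrow> real"
    and P :: "(real^'k) measure"
    and y :: "nat \<Rightarrow> real^'k"
    and N :: nat
  assumes J_open: "open J" and J_interval: "is_interval J" and J_ne: "J \<noteq> {}"
    and phi1: "\<And>t. t \<in> J \<Longrightarrow> (phi has_real_derivative phi1 t) (at t)"
    and phi2: "\<And>t. t \<in> J \<Longrightarrow> (phi1 has_real_derivative phi2 t) (at t)"
    and phi3: "\<And>t. t \<in> J \<Longrightarrow> (phi2 has_real_derivative phi3 t) (at t)"
    and phi3_cont: "continuous_on J phi3"
    and phi2_pos: "\<And>t. t \<in> J \<Longrightarrow> phi2 t > 0"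
    and h_prim: "\<And>t. t \<in> J \<Longrightarrow> (h has_real_derivative sqrt (phi2 t)) (at t)"
    and P_prob: "prob_space P"
    and P_sets: "sets P = sets (restrict_space borel (cube J))"
    and P_moment: "integrable P (\<lambda>x. (norm (vmap h x))^2)"
    and y_in: "\<And>i. i < N \<Longrightarrow> y i \<in> cube J"
    and y_inj: "inj_on y {..<N}"
    and cells_null: "\<And>i j. i < N \<Longrightarrow> j < N \<Longrightarrow> i \<noteq> j \<Longrightarrow>
        measure P (voronoi_cell h J y N i \<inter> voronoi_cell h J y N j) = 0"
    and cells_pos: "\<And>i. i < N \<Longrightarrow> measure P (voronoi_cell h J y N i) > 0"
  shows "\<forall>i<N.
      phi_centroid P h J (voronoi_cell h J y N i)
        = phi_centroid P h J (interior (voronoi_cell h J y N i))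
    \<and> phi_centroid P h J (voronoi_cell h J y N i) \<in> interior (voronoi_cell h J y N i)
    \<and> interior (voronoi_cell h J y N i) \<subseteq> voronoi_cell h J y N i"
proof (intro allI impI)
  fix i assume i: "i < N"
  interpret P: prob_space P by (rule P_prob)
  define S where "S = voronoi_cell h J y N"
  define T where "T = {x \<in> cube J. \<forall>j<N. j \<noteq> i \<longrightarrow> dphi h x (y i) < dphi h x (y j)}"
  have hcont: "continuous_on J h"
  proof (rule continuous_at_imp_continuous_on, rule ballI)
    fix t assume "t \<in> J"
    show "isCont h t" by (rule DERIV_isCont[OF h_prim[OF \<open>t \<in> J\<close>]])
  qed
  have cJ: "open (cube J :: (real^'k) set)" by (rule cube_open[OF J_open])
  have Dc: "continuous_on (cube J) (\<lambda>x::real^'k. dphi h x (y j) - dphi h x (y l))" for j l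
    by (intro continuous_intros dphi_cont[OF hcont])
  have openlt: "open {x \<in> cube J. dphi h x (y j) < dphi h x (y l)}" for j l
  proof -
    have "{x \<in> cube J. dphi h x (y j) < dphi h x (y l)} =
        cube J \<inter> (\<lambda>x. dphi h x (y j) - dphi h x (y l)) -` {..<0}" by auto
    then show ?thesis using continuous_open_preimage[OF Dc cJ, of "{..<0}" j l] by simp
  qed
  have T_eq: "T = cube J \<inter> (\<Inter>j\<in>{..<N} - {i}. {x \<in> cube J. dphi h x (y i) < dphi h x (y j)})"
    unfolding T_def by auto
  have T_open: "open T" unfolding T_eq using cJ openlt by (intro open_Int open_INT) auto
  have TS: "T \<subseteq> S i" unfolding T_def S_def voronoi_cell_def by (auto simp: less_imp_le)
  have TI: "T \<subseteq> interior (S i)" by (rule interior_maximal[OF TS T_open])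
  have S_eq: "S j = cube J - (\<Union>l\<in>{..<N}. {x \<in> cube J. dphi h x (y l) < dphi h x (y j)})" for j
    unfolding S_def voronoi_cell_def by (auto simp: not_less)
  have cJ_sets: "cube J \<in> sets P"
    by (rule sets_P_sub[OF P_sets borel_open[OF cJ]]) simp
  have lt_sets: "{x \<in> cube J. dphi h x (y j) < dphi h x (y l)} \<in> sets P" for j l
    by (rule sets_P_sub[OF P_sets borel_open[OF openlt]]) blast
  have S_sets: "S j \<in> sets P" for j
    unfolding S_eq using cJ_sets lt_sets by (intro sets.Diff sets.finite_UN) auto
  have T_sets: "T \<in> sets P"
    by (rule sets_P_sub[OF P_sets borel_open[OF T_open]]) (unfold T_def, blast)
  have I_sets: "interior (S i) \<in> sets P"
    by (rule sets_P_sub[OF P_sets borel_open[OF open_interior]])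
      (use interior_subset[of "S i"] in \<open>unfold S_def voronoi_cell_def, blast\<close>)
  have sub: "S i - T \<subseteq> (\<Union>l\<in>{..<N} - {i}. S i \<inter> S l)"
  proof
    fix x assume x: "x \<in> S i - T"
    then have xc: "x \<in> cube J" and le: "\<And>m. m < N \<Longrightarrow> dphi h x (y i) \<le> dphi h x (y m)"
      unfolding S_def voronoi_cell_def by auto
    from x xc obtain l where l: "l < N" "l \<noteq> i" "\<not> dphi h x (y i) < dphi h x (y l)"
      unfolding T_def by auto
    have eq: "dphi h x (y l) = dphi h x (y i)" using le[OF l(1)] l(3) by linarith
    have "x \<in> S l" unfolding S_def voronoi_cell_def using xc le eq by auto
    then show "x \<in> (\<Union>l\<in>{..<N} - {i}. S i \<inter> S l)" using x l by auto
  qed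
  have null0: "measure P (S i - T) = 0"
  proof -
    have "measure P (S i - T) \<le> measure P (\<Union>l\<in>{..<N} - {i}. S i \<inter> S l)"
      by (rule P.finite_measure_mono[OF sub]) (use S_sets in auto)
    also have "\<dots> \<le> (\<Sum>l\<in>{..<N} - {i}. measure P (S i \<inter> S l))"
      by (rule measure_UNION_le) (use S_sets in auto)
    also have "\<dots> = 0"
      using cells_null i unfolding S_def by (intro sum.neutral) auto
    finally show ?thesis using measure_nonneg[of P "S i - T"] by linarith
  qed
  have null: "S i - T \<in> null_sets P"
    using null0 S_sets T_sets by (auto simp: P.emeasure_eq_measure null_sets_def)
  have mS: "measure P (S i) = measure P T"
    using measure_Diff[of P "S i" T] null0 S_sets T_sets TS by (simp add: P.emeasure_eq_measure)
  have mI: "measure P (interior (S i)) = measure P T"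
  proof -
    have "measure P T \<le> measure P (interior (S i))"
      by (rule P.finite_measure_mono[OF TI I_sets])
    moreover have "measure P (interior (S i)) \<le> measure P (S i)"
      by (rule P.finite_measure_mono[OF interior_subset S_sets])
    ultimately show ?thesis using mS by linarith
  qed
  have aeS: "AE x in P. x \<in> T \<longleftrightarrow> x \<in> S i"
    using AE_not_in[OF null] by (rule AE_mp) (rule AE_I2, use TS in blast)
  have aeI: "AE x in P. x \<in> T \<longleftrightarrow> x \<in> interior (S i)"
    using AE_not_in[OF null] by (rule AE_mp) (rule AE_I2, use TI interior_subset in blast)
  have meas_vh: "vmap h \<in> borel_measurable P"
    using borel_measurable_continuous_on_restrict[OF vmap_cont[OF hcont]]
    by (subst measurable_cong_sets[OF P_sets refl])
  have sq_le: "t \<le> t^2 + 1" for t :: real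
  proof -
    have "0 \<le> (t - 1/2)^2" by simp
    then show ?thesis by (simp add: power2_eq_square algebra_simps)
  qed
  have i1: "integrable P (\<lambda>x. (norm (vmap h x))^2 + 1)"
    by (intro Bochner_Integration.integrable_add P_moment) simp
  have ae1: "AE x in P. norm (vmap h x) \<le> norm ((norm (vmap h x))^2 + 1)"
  proof (rule AE_I2)
    fix x
    have "norm (vmap h x) \<le> (norm (vmap h x))^2 + 1" by (rule sq_le)
    also have "\<dots> \<le> norm ((norm (vmap h x))^2 + 1)" by simp
    finally show "norm (vmap h x) \<le> norm ((norm (vmap h x))^2 + 1)" .
  qed
  have int_vh: "integrable P (vmap h)"
    by (rule Bochner_Integration.integrable_bound[OF i1 meas_vh ae1])
  have smS: "set_borel_measurable P (S i) (vmap h)"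
    unfolding set_borel_measurable_def
    by (intro borel_measurable_scaleR borel_measurable_indicator meas_vh S_sets)
  have smI: "set_borel_measurable P (interior (S i)) (vmap h)"
    unfolding set_borel_measurable_def
    by (intro borel_measurable_scaleR borel_measurable_indicator meas_vh I_sets)
  have smT: "set_borel_measurable P T (vmap h)"
    unfolding set_borel_measurable_def
    by (intro borel_measurable_scaleR borel_measurable_indicator meas_vh T_sets)
  have intS: "(LINT x:S i|P. vmap h x) = (LINT x:T|P. vmap h x)"
    by (rule set_integral_cong_set[OF smT smS aeS])
  have intI: "(LINT x:interior (S i)|P. vmap h x) = (LINT x:T|P. vmap h x)"
    by (rule set_integral_cong_set[OF smT smI aeI])
  define m where "m = (1 / measure P T) *\<^sub>R integral\<^sup>L P (\<lambda>x. indicator T x *\<^sub>R vmap h x)"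
  define z where "z = vmap (the_inv_into J h) m"
  have centS: "phi_centroid P h J (S i) = z"
    unfolding phi_centroid_def mS intS unfolding z_def m_def set_lebesgue_integral_def ..
  have centI: "phi_centroid P h J (interior (S i)) = z"
    unfolding phi_centroid_def mI intI unfolding z_def m_def set_lebesgue_integral_def ..
  have posT: "measure P T > 0" using cells_pos[OF i] mS unfolding S_def by simp
  have hmono: "h a < h b" if ab: "a \<in> J" "b \<in> J" "a < b" for a b
  proof (rule DERIV_pos_imp_increasing[OF ab(3)])
    fix x assume x: "a \<le> x" "x \<le> b"
    then have xJ: "x \<in> J" using J_interval ab unfolding is_interval_1 by blast
    show "\<exists>y. DERIV h x :> y \<and> y > 0"
      using h_prim[OF xJ] phi2_pos[OF xJ] by auto
  qed
  have inj: "inj_on h J"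
  proof (rule inj_onI)
    fix a b assume ab: "a \<in> J" "b \<in> J" "h a = h b"
    show "a = b"
    proof (rule linorder_cases[of a b])
      assume "a < b" then show ?thesis using hmono[of a b] ab by simp
    next
      assume "b < a" then show ?thesis using hmono[of b a] ab by simp
    qed
  qed
  have hJ_int: "is_interval (h ` J)"
    unfolding is_interval_connected_1
    by (rule connected_continuous_image[OF hcont]) (use J_interval is_interval_connected_1 in blast)
  have ax: "axis k 1 \<bullet> v = v $ k" for k and v :: "real^'k"
    by (metis cart_eq_inner_axis inner_commute)
  have mk: "m $ k \<in> h ` J" for k
  proof -
    have "axis k 1 \<bullet> m \<in> h ` J"
      unfolding m_def
    proof (rule mean_interval[OF P.finite_measure_axioms T_sets posT int_vh hJ_int])
      fix x assume "x \<in> T"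
      then have "x $ k \<in> J" unfolding T_def cube_def by blast
      then show "axis k 1 \<bullet> vmap h x \<in> h ` J"
        unfolding ax vmap_def by simp
    qed
    then show ?thesis unfolding ax .
  qed
  have zJ: "z \<in> cube J"
    unfolding z_def cube_def vmap_def using the_inv_into_into[OF inj mk] by simp
  have hz: "vmap h z = m"
    unfolding z_def vmap_def vec_eq_iff using f_the_inv_into_f[OF inj mk] by simp
  have zT: "z \<in> T"
  proof -
    have "dphi h z (y i) < dphi h z (y j)" if j: "j < N" "j \<noteq> i" for j
    proof -
      define a where "a = vmap h (y i)"
      define b where "b = vmap h (y j)"
      define c where "c = ((\<chi> k. 2 * (b $ k - a $ k)) :: real^'k)"
      define d where "d = (\<Sum>k\<in>UNIV. (a $ k)^2 - (b $ k)^2)"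
      have "c \<bullet> m + d < 0"
        unfolding m_def
      proof (rule mean_affine[OF P.finite_measure_axioms T_sets posT int_vh])
        fix x assume x: "x \<in> T"
        then have "dphi h x (y i) < dphi h x (y j)" unfolding T_def using j by blast
        then have "sqd (vmap h x) a < sqd (vmap h x) b"
          unfolding dphi_sqd a_def b_def by simp
        then show "c \<bullet> vmap h x + d < 0"
          using sqd_affine[of "vmap h x" a b] unfolding c_def d_def by linarith
      qed
      then have "sqd m a < sqd m b"
        using sqd_affine[of m a b] unfolding c_def d_def by linarith
      then show ?thesis unfolding dphi_sqd hz a_def b_def by simp
    qed
    then show ?thesis unfolding T_def using zJ by blast
  qed
  have "z \<in> interior (S i)" using zT TI by blast
  then show "phi_centroid P h J (voronoi_cell h J y N i) = phi_centroid P h J (interior (voronoi_cell h J y N i)) \<and> phi_centroid P h J (voronoi_cell h J y N i) \<in> interior (voronoi_cell h J y N i) \<and> interior (voronoi_cell h J y N i) \<subseteq> voronoi_cell h J y N i"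
    using centS centI interior_subset[of "S i"] unfolding S_def by simp
qed

end
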